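(* Let $\phi(r)=r^{-12}-2r^{-6}$ (Lennard-Jones), $\eta=\phi'$, $\hat\eta(r)=\eta(r)+2\eta(2r)$, let $\tilde r_2$ be the unique point with $\eta''<0$ on $(0,\tilde r_2)$ and $\eta''>0$ on $(\tilde r_2,\infty)$, and let $a_1$ be the unique point with $\hat\eta'>0$ on $(0,a_1)$ and $\hat\eta'<0$ on $(a_1,\infty)$. Let $N,K$ be positive integers with $K<N-1$. For $\mathbf r=(r_{-N},\dots,r_N)\in(0,\infty)^{2N+1}$ define $F^{QCF}_j(\mathbf r)$, $j=-N,\dots,N+1$, by $F^{QCF}_{-N}(\mathbf r)=\eta(r_{-N})+2\eta(2r_{-N})$; $F^{QCF}_j(\mathbf r)=[\eta(r_j)+2\eta(2r_j)]-[\eta(r_{j-1})+2\eta(2r_{j-1})]$ for $-N+1\le j\le -K$ and for $K+1\le j\le N$; $F^{QCF}_j(\mathbf r)=[\eta(r_j)+\eta(r_j+r_{j+1})]-[\eta(r_{j-1})+\eta(r_{j-1}+r_{j-2})]$ for $-K+1\le j\le K$; $F^{QCF}_{N+1}(\mathbf r)=-[\eta(r_N)+2\eta(2r_N)]$. Let $f_{-N},\dots,f_{N+1}\in\mathbb R$ be anti-symmetric, i.e. $f_{j+1}=-f_{-j}$ for $j=0,\dots,N$, and set $\Phi_j=-\sum_{i=-N}^{j}f_i$ for $j=-N,\dots,N$. For any $r_U$ with $\tilde r_2/2<r_U<a_1$, let $r_L=\max\left(\frac{\tilde r_2}{2},\left(\frac{63}{16\,\eta'(r_U)}\right)^{1/8}\right)$.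 If $r_L<r_U$, then the equilibrium equations $F^{QCF}_j(\mathbf r)+f_j=0$, $j=-N,\dots,N+1$, have a unique symmetric solution $\mathbf r$ in $\Omega=(r_L,r_U)^{2N+1}$ whenever $\eta(r_L)+4\eta(2r_L)-2\eta(2r_U)<\Phi_j<\eta(r_U)+4\eta(2r_U)-2\eta(2r_L)$ for $j=-N,\dots,N$.
   Context: $F^{QCF}_j$ is the force-based quasicontinuum force on the $j$-th representative atom of a one-dimensional chain in terms of the lattice spacings $r_j$; $f_j$ are external forces. A vector $\mathbf r$ is symmetric if $r_{-j}=r_j$ for $j=1,\dots,N$. *)

theory Defs
  imports "HOL-Analysis.Analysis"
begin

definition phi :: "real \<Rightarrow> real" where
  "phi r = r powi (-12) - 2 * r powi (-6)"

definition eta :: "real \<Rightarrow> real" where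
  "eta r = deriv phi r"

definition eta_hat :: "real \<Rightarrow> real" where
  "eta_hat r = eta r + 2 * eta (2 * r)"

definition r2t :: real where
  "r2t = (THE t. 0 < t \<and> (\<forall>x. 0 < x \<and> x < t \<longrightarrow> deriv (deriv eta) x < 0)
                       \<and> (\<forall>x. t < x \<longrightarrow> deriv (deriv eta) x > 0))"

definition a1 :: real where
  "a1 = (THE t. 0 < t \<and> (\<forall>x. 0 < x \<and> x < t \<longrightarrow> deriv eta_hat x > 0)
                      \<and> (\<forall>x. t < x \<longrightarrow> deriv eta_hat x < 0))"

text \<open>Force-based QC force on atom j (j = -N..N+1), lattice spacings r j (j = -N..N).\<close>
definition FQCF :: "int \<Rightarrow> int \<Rightarrow> (int \<Rightarrow> real) \<Rightarrow> int \<Rightarrow> real" where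
  "FQCF N K r j =
     (if j = -N then eta (r (-N)) + 2 * eta (2 * r (-N))
      else if j = N + 1 then - (eta (r N) + 2 * eta (2 * r N))
      else if (-N + 1 \<le> j \<and> j \<le> -K) \<or> (K + 1 \<le> j \<and> j \<le> N) then
        (eta (r j) + 2 * eta (2 * r j)) - (eta (r (j - 1)) + 2 * eta (2 * r (j - 1)))
      else
        (eta (r j) + eta (r j + r (j + 1))) - (eta (r (j - 1)) + eta (r (j - 1) + r (j - 2))))"

definition symmetric_vec :: "int \<Rightarrow> (int \<Rightarrow> real) \<Rightarrow> bool" where
  "symmetric_vec N r \<longleftrightarrow> (\<forall>j. 1 \<le> j \<and> j \<le> N \<longrightarrow> r (-j) = r j)"

definition Phi :: "int \<Rightarrow> (int \<Rightarrow> real) \<Rightarrow> int \<Rightarrow> real" where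
  "Phi N f j = - (\<Sum>i = -N..j. f i)"

definition r_lower :: "real \<Rightarrow> real" where
  "r_lower rU = max (r2t / 2) ((63 / (16 * deriv eta rU)) powr (1/8))"

end

theory Submission
  imports Defs
begin

definition e0 :: "real \<Rightarrow> real" where "e0 r = 12 / r^7 - 12 / r^13"
definition e1 :: "real \<Rightarrow> real" where "e1 r = 156 / r^14 - 84 / r^8"
definition e2 :: "real \<Rightarrow> real" where "e2 r = 672 / r^9 - 2184 / r^15"

lemma phi_eq: "phi = (\<lambda>r. 1 / r^12 - 2 / r^6)"
  by (rule ext) (simp add: phi_def power_int_minus divide_inverse)

lemma phi_deriv: "x \<noteq> 0 \<Longrightarrow> (phi has_real_derivative e0 x) (at x)"
  unfolding phi_eq e0_def
  by (auto intro!: derivative_eq_intros simp: field_simps)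

lemma eta_eq: "x \<noteq> 0 \<Longrightarrow> eta x = e0 x"
  unfolding eta_def using phi_deriv by (rule DERIV_imp_deriv)

lemma e0_deriv: "x \<noteq> 0 \<Longrightarrow> (e0 has_real_derivative e1 x) (at x)"
  unfolding e0_def e1_def
  by (auto intro!: derivative_eq_intros simp: field_simps)

lemma eta_deriv: "x \<noteq> 0 \<Longrightarrow> (eta has_real_derivative e1 x) (at x)"
  apply (rule has_field_derivative_transform_within_open[of e0 _ _ "-{0}"])
  using e0_deriv eta_eq by auto

lemma deriv_eta: "x \<noteq> 0 \<Longrightarrow> deriv eta x = e1 x"
  using eta_deriv by (rule DERIV_imp_deriv)

lemma e1_deriv: "x \<noteq> 0 \<Longrightarrow> (e1 has_real_derivative e2 x) (at x)"
  unfolding e1_def e2_def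
  by (auto intro!: derivative_eq_intros simp: field_simps)

lemma deriv_eta_deriv: "x \<noteq> 0 \<Longrightarrow> (deriv eta has_real_derivative e2 x) (at x)"
  apply (rule has_field_derivative_transform_within_open[of e1 _ _ "-{0}"])
  using e1_deriv deriv_eta by auto

lemma deriv2_eta: "x \<noteq> 0 \<Longrightarrow> deriv (deriv eta) x = e2 x"
  using deriv_eta_deriv by (rule DERIV_imp_deriv)

lemma eta_hat_deriv: "x \<noteq> 0 \<Longrightarrow> (eta_hat has_real_derivative (e1 x + 4 * e1 (2*x))) (at x)"
proof -
  assume x: "x \<noteq> 0"
  have "((\<lambda>x. eta x + 2 * eta (2 * x)) has_real_derivative (e1 x + 2 * (e1 (2*x) * 2))) (at x)"
    using x by (auto intro!: derivative_eq_intros DERIV_chain2[OF eta_deriv])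
  then show ?thesis unfolding eta_hat_def[abs_def] by simp
qed


lemma e2_form: "x > 0 \<Longrightarrow> e2 x = (672 * x^6 - 2184) / x^15"
  unfolding e2_def by (simp add: field_simps)

lemma e1_form: "x > 0 \<Longrightarrow> e1 x = (156 - 84 * x^6) / x^14"
  unfolding e1_def by (simp add: field_simps)

lemma pow6_less: "0 < x \<Longrightarrow> 0 < t \<Longrightarrow> (x < t) = (x^6 < (t::real)^6)"
  by (meson less_le_not_le power_less_imp_less_base power_strict_mono zero_less_numeral less_imp_le)

lemma r2t_eq: "r2t = root 6 (13/4)"
proof -
  let ?t = "root 6 (13/4) :: real"
  have t0: "?t > 0" by simp
  have t6: "?t^6 = 13/4" by simp
  let ?P = "\<lambda>t. 0 < t \<and> (\<forall>x. 0 < x \<and> x < t \<longrightarrow> deriv (deriv eta) x < 0)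
                       \<and> (\<forall>x. t < x \<longrightarrow> deriv (deriv eta) x > 0)"
  have neg: "deriv (deriv eta) x < 0" if "0 < x" "x < ?t" for x
  proof -
    have "x^6 < 13/4" using pow6_less[OF that(1) t0] that t6 by simp
    then show ?thesis using that deriv2_eta[of x] e2_form[of x] by (simp add: divide_neg_pos)
  qed
  have pos: "deriv (deriv eta) x > 0" if "?t < x" for x
  proof -
    have x0: "x > 0" using that t0 by linarith
    have "x^6 > 13/4" using pow6_less[OF t0 x0] that t6 by simp
    then show ?thesis using x0 deriv2_eta[of x] e2_form[of x] by simp
  qed
  have P: "?P ?t" using t0 neg pos by blast
  have U: "t = ?t" if "?P t" for t
  proof (rule ccontr)
    assume "t \<noteq> ?t"
    then consider "t < ?t" | "?t < t" by linarith
    then show False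
    proof cases
      case 1
      define x where "x = (t + ?t)/2"
      have "0 < x" "x < ?t" "t < x" using 1 that by (auto simp: x_def)
      then show False using neg[of x] that by auto
    next
      case 2
      define x where "x = (t + ?t)/2"
      have "0 < x" "x < t" "?t < x" using 2 t0 unfolding x_def by argo+
      then show False using pos[of x] that by auto
    qed
  qed
  show ?thesis unfolding r2t_def using P U by (rule the_equality)
qed

lemma r2t_pos: "r2t > 0" by (simp add: r2t_eq)
lemma r2t_pow: "r2t^6 = 13/4" by (simp add: r2t_eq)

lemma deriv_eta_hat: "x \<noteq> 0 \<Longrightarrow> deriv eta_hat x = e1 x + 4 * e1 (2*x)"
  using eta_hat_deriv by (rule DERIV_imp_deriv)

lemma eh_form: "x > 0 \<Longrightarrow> e1 x + 4 * e1 (2*x) = ((156*4097/4096) - (84*65/64) * x^6) / x^14"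
  unfolding e1_def by (simp add: field_simps)

lemma a1_prop: "0 < a1 \<and> (\<forall>x. 0 < x \<and> x < a1 \<longrightarrow> deriv eta_hat x > 0)
                      \<and> (\<forall>x. a1 < x \<longrightarrow> deriv eta_hat x < 0)"
proof -
  define c where "c = ((156*4097/4096) / (84*65/64) :: real)"
  let ?t = "root 6 c :: real"
  have c0: "c > 0" by (simp add: c_def)
  have t0: "?t > 0" using c0 by simp
  have t6: "?t^6 = c" using c0 by simp
  let ?P = "\<lambda>t. 0 < t \<and> (\<forall>x. 0 < x \<and> x < t \<longrightarrow> deriv eta_hat x > 0)
                      \<and> (\<forall>x. t < x \<longrightarrow> deriv eta_hat x < 0)"
  have pos: "deriv eta_hat x > 0" if "0 < x" "x < ?t" for x
  proof -
    have "x^6 < c" using pow6_less[OF that(1) t0] that t6 by simp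
    then have "(84*65/64) * x^6 < (156*4097/4096)" unfolding c_def by (simp add: field_simps)
    then show ?thesis using that deriv_eta_hat[of x] eh_form[of x] by simp
  qed
  have neg: "deriv eta_hat x < 0" if "?t < x" for x
  proof -
    have x0: "x > 0" using that t0 by linarith
    have "x^6 > c" using pow6_less[OF t0 x0] that t6 by simp
    then have "(84*65/64) * x^6 > (156*4097/4096)" unfolding c_def by (simp add: field_simps)
    then show ?thesis using x0 deriv_eta_hat[of x] eh_form[of x] by (simp add: divide_neg_pos)
  qed
  have P: "?P ?t" using t0 neg pos by blast
  have U: "t = ?t" if "?P t" for t
  proof (rule ccontr)
    assume "t \<noteq> ?t"
    then consider "t < ?t" | "?t < t" by linarith
    then show False
    proof cases
      case 1
      define x where "x = (t + ?t)/2"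
      have "0 < x" "x < ?t" "t < x" using 1 that by (auto simp: x_def)
      then show False using pos[of x] that by auto
    next
      case 2
      define x where "x = (t + ?t)/2"
      have "0 < x" "x < t" "?t < x" using 2 t0 unfolding x_def by argo+
      then show False using neg[of x] that by auto
    qed
  qed
  have "a1 = ?t" unfolding a1_def using P U by (rule the_equality)
  then show ?thesis using P by simp
qed

lemma rU_small: assumes "0 < rU" "rU < a1" shows "rU^6 < 13/7"
proof -
  have "deriv eta_hat rU > 0" using a1_prop assms by blast
  then have "0 < ((156*4097/4096) - (84*65/64) * rU^6) / rU^14"
    using deriv_eta_hat[of rU] eh_form[of rU] assms by simp
  then have "(84*65/64) * rU^6 < (156*4097/4096)" using assms
    by (simp add: zero_less_divide_iff)
  then show ?thesis by simp
qed


lemma setup_facts: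
  assumes "r2t / 2 < rU" "rU < a1" "r_lower rU < rU"
  shows "0 < r_lower rU" "r2t \<le> 2 * r_lower rU" "rU^6 < 13/7" "e1 rU \<ge> 12 * (21 / (64 * (r_lower rU)^8))"
    "e1 rU > 0"
proof -
  have rU0: "0 < rU" using assms(1) r2t_pos by linarith
  show u6: "rU^6 < 13/7" using rU_small[OF rU0 assms(2)] .
  have "156 - 84 * rU^6 > 0" using u6 by simp
  then show e1p: "e1 rU > 0" using e1_form[OF rU0] rU0 by simp
  show ge: "r2t \<le> 2 * r_lower rU" unfolding r_lower_def by linarith
  then show rL0: "0 < r_lower rU" using r2t_pos by linarith
  define b where "b = 63 / (16 * e1 rU)"
  have b0: "b > 0" using e1p by (simp add: b_def)
  have "b powr (1/8) \<le> r_lower rU" unfolding r_lower_def b_def deriv_eta[of rU, OF rU0[THEN less_imp_neq, symmetric]] by simp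
  then have "(b powr (1/8))^8 \<le> (r_lower rU)^8"
    by (simp add: power_mono)
  moreover have "(b powr (1/8))^8 = b" using b0
    by (simp add: powr_realpow[symmetric] powr_powr)
  ultimately have "b \<le> (r_lower rU)^8" by simp
  then have "63 \<le> (r_lower rU)^8 * (16 * e1 rU)" using e1p unfolding b_def
    by (simp add: divide_le_eq mult.commute)
  then show "e1 rU \<ge> 12 * (21 / (64 * (r_lower rU)^8))" using rL0
    by (simp add: field_simps)
qed

context
  fixes rL rU M :: real
  assumes rL0: "0 < rL" and rLU: "rL < rU" and r2: "r2t \<le> 2 * rL" and u6: "rU^6 < 13/7"
    and e1U: "e1 rU \<ge> 12 * M" and Mdef: "M = 21 / (64 * rL^8)"
begin

lemma M_pos: "M > 0" using Mdef rL0 by simp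

lemma e1_low: assumes "rL \<le> x" "x \<le> rU" shows "e1 x \<ge> 12 * M"
proof -
  have "e1 rU \<le> e1 x"
  proof (rule DERIV_nonpos_imp_nonincreasing[OF assms(2)])
    fix y assume y: "x \<le> y" "y \<le> rU"
    have y0: "y > 0" using y assms rL0 by linarith
    have "y^6 \<le> rU^6" using y y0 by (simp add: power_mono)
    then have "672 * y^6 - 2184 \<le> 0" using u6 by simp
    then have "e2 y \<le> 0" using e2_form[OF y0] y0 by (simp add: divide_nonpos_pos)
    then show "\<exists>d. (e1 has_real_derivative d) (at y) \<and> d \<le> 0" using e1_deriv[of y] y0 by auto
  qed
  then show ?thesis using e1U by linarith
qed

lemma e1_high: assumes "2 * rL \<le> s" shows "e1 s < 0" "- M \<le> e1 s"
proof -
  have s0: "s > 0" using assms rL0 by linarith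
  have "r2t^6 \<le> s^6" using r2 assms r2t_pos by (simp add: power_mono)
  then have s6: "s^6 \<ge> 13/4" using r2t_pow by simp
  have "156 - 84 * s^6 < 0" using s6 by simp
  then show "e1 s < 0" using e1_form[OF s0] s0 by (simp add: divide_neg_pos)
  have "(2*rL)^8 \<le> s^8" using assms rL0 by (intro power_mono) auto
  then have "84 / s^8 \<le> 84 / (2*rL)^8" using rL0 s0 by (intro divide_left_mono) auto
  also have "\<dots> = M" using Mdef by (simp add: field_simps)
  finally have "84 / s^8 \<le> M" .
  moreover have "e1 s \<ge> - 84 / s^8" unfolding e1_def using s0 by simp
  ultimately show "- M \<le> e1 s" by linarith
qed

lemma eta_low_lip: assumes "rL \<le> a" "a \<le> b" "b \<le> rU" shows "eta b - eta a \<ge> 12 * M * (b - a)"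
proof -
  have "(\<lambda>x. eta x - 12 * M * x) a \<le> (\<lambda>x. eta x - 12 * M * x) b"
  proof (rule DERIV_nonneg_imp_nondecreasing[OF assms(2)])
    fix y assume y: "a \<le> y" "y \<le> b"
    have y0: "y \<noteq> 0" using y assms rL0 by linarith
    have "((\<lambda>x. eta x - 12 * M * x) has_real_derivative e1 y - 12 * M) (at y)"
      using eta_deriv[OF y0] by (auto intro!: derivative_eq_intros)
    moreover have "e1 y - 12 * M \<ge> 0" using e1_low[of y] y assms by simp
    ultimately show "\<exists>d. ((\<lambda>x. eta x - 12 * M * x) has_real_derivative d) (at y) \<and> d \<ge> 0" by blast
  qed
  then show ?thesis by (simp add: algebra_simps)
qed

lemma eta_high_lip: assumes "2 * rL \<le> a" "a \<le> b" shows "eta b \<le> eta a" "eta a - eta b \<le> M * (b - a)"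
proof -
  have "(\<lambda>x. eta x + M * x) a \<le> (\<lambda>x. eta x + M * x) b"
  proof (rule DERIV_nonneg_imp_nondecreasing[OF assms(2)])
    fix y assume y: "a \<le> y" "y \<le> b"
    have y0: "y \<noteq> 0" using y assms rL0 by linarith
    have "((\<lambda>x. eta x + M * x) has_real_derivative e1 y + M) (at y)"
      using eta_deriv[OF y0] by (auto intro!: derivative_eq_intros)
    moreover have "e1 y + M \<ge> 0" using e1_high[of y] y assms by simp
    ultimately show "\<exists>d. ((\<lambda>x. eta x + M * x) has_real_derivative d) (at y) \<and> d \<ge> 0" by blast
  qed
  then show "eta a - eta b \<le> M * (b - a)" by (simp add: algebra_simps)
  show "eta b \<le> eta a"
  proof (rule DERIV_nonpos_imp_nonincreasing[OF assms(2)])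
    fix y assume y: "a \<le> y" "y \<le> b"
    have y0: "y \<noteq> 0" using y assms rL0 by linarith
    show "\<exists>d. (eta has_real_derivative d) (at y) \<and> d \<le> 0"
      using eta_deriv[OF y0] e1_high[of y] y assms by (intro exI[of _ "e1 y"]) auto
  qed
qed

lemma eta_high_strict: assumes "2 * rL \<le> a" "a < b" shows "eta b < eta a"
proof (rule DERIV_neg_imp_decreasing[OF assms(2)])
  fix y assume y: "a \<le> y" "y \<le> b"
  have y0: "y \<noteq> 0" using y assms rL0 by linarith
  show "\<exists>d. (eta has_real_derivative d) (at y) \<and> d < 0"
    using eta_deriv[OF y0] e1_high[of y] y assms by (intro exI[of _ "e1 y"]) auto
qed

lemma eta_cont: "continuous_on {rL..rU} eta"
  by (rule DERIV_continuous_on[where D=e1]) (use eta_deriv rL0 in \<open>auto intro: has_field_derivative_at_within\<close>)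

lemma eta_hat_cont: "continuous_on {rL..rU} eta_hat"
  by (rule DERIV_continuous_on[where D="\<lambda>x. e1 x + 4 * e1 (2*x)"]) (use eta_hat_deriv rL0 in \<open>auto intro: has_field_derivative_at_within\<close>)

lemma eta_hat_strict: assumes "rL \<le> a" "a < b" "b \<le> rU" shows "eta_hat a < eta_hat b"
proof (rule DERIV_pos_imp_increasing[OF assms(2)])
  fix y assume y: "a \<le> y" "y \<le> b"
  have y0: "y \<noteq> 0" using y assms rL0 by linarith
  have "e1 y \<ge> 12 * M" using e1_low[of y] y assms by simp
  moreover have "e1 (2*y) \<ge> - M" using e1_high[of "2*y"] y assms by simp
  ultimately have "e1 y + 4 * e1 (2*y) > 0" using M_pos by linarith
  then show "\<exists>d. (eta_hat has_real_derivative d) (at y) \<and> d > 0"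
    using eta_hat_deriv[OF y0] by blast
qed

end


lemma contraction_fix:
  fixes T :: "(int \<Rightarrow> real) \<Rightarrow> (int \<Rightarrow> real)" and I :: "int set" and c :: "int \<Rightarrow> real"
    and S :: "(int \<Rightarrow> real) set"
  assumes Sdef: "S = {x. (\<forall>i\<in>I. a \<le> x i \<and> x i \<le> b) \<and> (\<forall>i. i \<notin> I \<longrightarrow> x i = c i)}"
  assumes fin: "finite I" "I \<noteq> {}" and ab: "a \<le> b"
    and inv: "\<And>x. x \<in> S \<Longrightarrow> T x \<in> S"
    and contr: "\<And>x y i. x \<in> S \<Longrightarrow> y \<in> S \<Longrightarrow> i \<in> I \<Longrightarrow> \<bar>T x i - T y i\<bar> \<le> q * Max ((\<lambda>i. \<bar>x i - y i\<bar>) ` I)"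
    and q: "0 \<le> q" "q < 1"
  shows "\<exists>x\<in>S. T x = x"
proof -
  define D where "D = (\<lambda>x y :: int \<Rightarrow> real. Max ((\<lambda>i. \<bar>x i - y i\<bar>) ` I))"
  have Dge: "\<bar>x i - y i\<bar> \<le> D x y" if "i \<in> I" for x y i
    unfolding D_def using fin that by (intro Max_ge) auto
  have Dle: "D x y \<le> e" if "\<And>i. i \<in> I \<Longrightarrow> \<bar>x i - y i\<bar> \<le> e" for x y e
    unfolding D_def using fin that by (subst Max_le_iff) auto
  define x0 where "x0 = (\<lambda>i. if i \<in> I then a else c i)"
  have x0S: "x0 \<in> S" unfolding Sdef x0_def using ab by auto
  define xs where "xs = (\<lambda>n. (T ^^ n) x0)"
  have xsS: "xs n \<in> S" for n
    by (induction n) (auto simp: xs_def x0S inv)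
  have xsSuc: "xs (Suc n) = T (xs n)" for n by (simp add: xs_def)
  define d where "d = (\<lambda>n. D (xs (Suc n)) (xs n))"
  have dstep: "d (Suc n) \<le> q * d n" for n
    unfolding d_def
  proof (rule Dle)
    fix i assume "i \<in> I"
    then show "\<bar>xs (Suc (Suc n)) i - xs (Suc n) i\<bar> \<le> q * D (xs (Suc n)) (xs n)"
      using contr[OF xsS[of "Suc n"] xsS[of n]] unfolding D_def by (simp only: xsSuc[of "Suc n"] xsSuc[of n])
  qed
  have dpow: "d n \<le> q^n * d 0" for n
  proof (induction n)
    case 0 then show ?case by simp
  next
    case (Suc n)
    have "d (Suc n) \<le> q * d n" by (rule dstep)
    also have "\<dots> \<le> q * (q^n * d 0)" using Suc q by (intro mult_left_mono) auto
    finally show ?case by simp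
  qed
  have conv: "convergent (\<lambda>n. xs n i)" if i: "i \<in> I" for i
  proof -
    define \<delta> where "\<delta> = (\<lambda>m. xs (Suc m) i - xs m i)"
    have "norm (\<delta> m) \<le> d 0 * q^m" for m
      using Dge[OF i, of "xs (Suc m)" "xs m"] dpow[of m] unfolding \<delta>_def d_def by (simp add: mult.commute)
    moreover have "summable (\<lambda>m. d 0 * q^m)" using q by (intro summable_mult summable_geometric) auto
    ultimately have "summable \<delta>" by (intro summable_comparison_test[of \<delta> "\<lambda>m. d 0 * q^m"]) auto
    then have "(\<lambda>n. x0 i + (\<Sum>m<n. \<delta> m)) \<longlonglongrightarrow> x0 i + suminf \<delta>"
      by (intro tendsto_add tendsto_const summable_LIMSEQ)
    moreover have "x0 i + (\<Sum>m<n. \<delta> m) = xs n i" for n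
      unfolding \<delta>_def by (subst sum_lessThan_telescope) (simp add: xs_def)
    ultimately show ?thesis by (auto simp: convergent_def)
  qed
  define y where "y = (\<lambda>i. if i \<in> I then lim (\<lambda>n. xs n i) else c i)"
  have ylim: "(\<lambda>n. xs n i) \<longlonglongrightarrow> y i" if "i \<in> I" for i
    using conv[OF that] that by (simp add: y_def convergent_LIMSEQ_iff)
  have yS: "y \<in> S"
  proof -
    have "a \<le> y i \<and> y i \<le> b" if "i \<in> I" for i
    proof
      show "a \<le> y i" by (rule LIMSEQ_le_const[OF ylim[OF that]]) (use xsS that in \<open>auto simp: Sdef\<close>)
      show "y i \<le> b" by (rule LIMSEQ_le_const2[OF ylim[OF that]]) (use xsS that in \<open>auto simp: Sdef\<close>)
    qed
    then show ?thesis unfolding Sdef by (auto simp: y_def)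
  qed
  have "T y = y"
  proof
    fix i
    show "T y i = y i"
    proof (cases "i \<in> I")
      case False
      then show ?thesis using inv[OF yS] yS unfolding Sdef by auto
    next
      case True
      have s0: "(\<lambda>n. \<Sum>j\<in>I. \<bar>xs n j - y j\<bar>) \<longlonglongrightarrow> 0"
      proof -
        have "(\<lambda>n. \<Sum>j\<in>I. \<bar>xs n j - y j\<bar>) \<longlonglongrightarrow> (\<Sum>j\<in>I. 0)"
        proof (rule tendsto_sum)
          fix j assume j: "j \<in> I"
          have "(\<lambda>n. xs n j - y j) \<longlonglongrightarrow> 0" using ylim[OF j] by (simp add: LIM_zero_iff)
          then show "(\<lambda>n. \<bar>xs n j - y j\<bar>) \<longlonglongrightarrow> 0" by (rule tendsto_rabs_zero)
        qed
        then show ?thesis by simp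
      qed
      have "(\<lambda>n. q * (\<Sum>j\<in>I. \<bar>xs n j - y j\<bar>)) \<longlonglongrightarrow> q * 0"
        by (intro tendsto_mult tendsto_const s0)
      then have g0: "(\<lambda>n. q * (\<Sum>j\<in>I. \<bar>xs n j - y j\<bar>)) \<longlonglongrightarrow> 0" by simp
      have "norm (T (xs n) i - T y i) \<le> q * (\<Sum>j\<in>I. \<bar>xs n j - y j\<bar>)" for n
      proof -
        have "\<bar>T (xs n) i - T y i\<bar> \<le> q * D (xs n) y" using contr[OF xsS yS True] by (simp add: D_def)
        also have "D (xs n) y \<le> (\<Sum>j\<in>I. \<bar>xs n j - y j\<bar>)"
          by (rule Dle) (use fin in \<open>auto intro: member_le_sum\<close>)
        then have "q * D (xs n) y \<le> q * (\<Sum>j\<in>I. \<bar>xs n j - y j\<bar>)" using q by (intro mult_left_mono) auto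
        finally show ?thesis by simp
      qed
      then have "(\<lambda>n. T (xs n) i - T y i) \<longlonglongrightarrow> 0"
        by (intro Lim_null_comparison[OF _ g0]) auto
      then have "(\<lambda>n. T (xs n) i) \<longlonglongrightarrow> T y i" by (simp add: LIM_zero_iff)
      moreover have "(\<lambda>n. T (xs n) i) \<longlonglongrightarrow> y i"
        using LIMSEQ_Suc[OF ylim[OF True]] by (simp add: xsSuc)
      ultimately show ?thesis by (rule LIMSEQ_unique)
    qed
  qed
  then show ?thesis using yS by blast
qed

lemma contraction_uniq:
  fixes T :: "(int \<Rightarrow> real) \<Rightarrow> (int \<Rightarrow> real)" and I :: "int set" and c :: "int \<Rightarrow> real"
    and S :: "(int \<Rightarrow> real) set"
  assumes Sdef: "S = {x. (\<forall>i\<in>I. a \<le> x i \<and> x i \<le> b) \<and> (\<forall>i. i \<notin> I \<longrightarrow> x i = c i)}"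
  assumes fin: "finite I" "I \<noteq> {}"
    and contr: "\<And>x y i. x \<in> S \<Longrightarrow> y \<in> S \<Longrightarrow> i \<in> I \<Longrightarrow> \<bar>T x i - T y i\<bar> \<le> q * Max ((\<lambda>i. \<bar>x i - y i\<bar>) ` I)"
    and q: "0 \<le> q" "q < 1"
    and xy: "x \<in> S" "y \<in> S" "T x = x" "T y = y"
  shows "x = y"
proof -
  define m where "m = Max ((\<lambda>i. \<bar>x i - y i\<bar>) ` I)"
  have ge: "\<bar>x i - y i\<bar> \<le> m" if "i \<in> I" for i
    unfolding m_def using fin that by (intro Max_ge) auto
  have "m \<le> q * m" unfolding m_def using fin
    by (subst Max_le_iff) (use contr[OF xy(1,2)] xy(3,4) in \<open>auto simp: m_def\<close>)
  moreover obtain i0 where "i0 \<in> I" using fin by auto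
  then have "m \<ge> 0" using ge[of i0] by linarith
  ultimately have m0: "m \<le> 0" using q by (smt (verit) mult_le_cancel_right1)
  show ?thesis
  proof
    fix i show "x i = y i"
      using ge[of i] m0 xy(1,2) unfolding Sdef by (cases "i \<in> I") auto
  qed
qed


lemma FQCF_at: assumes "0 < K" "K < N - 1" "-K+1 \<le> j" "j \<le> K"
  shows "FQCF N K r j = (eta (r j) + eta (r j + r (j+1))) - (eta (r (j-1)) + eta (r (j-1) + r (j-2)))"
  using assms unfolding FQCF_def by auto

lemma FQCF_cr: assumes "0 < K" "K < N - 1" "K+1 \<le> j" "j \<le> N"
  shows "FQCF N K r j = eta_hat (r j) - eta_hat (r (j-1))"
  using assms unfolding FQCF_def eta_hat_def by auto

lemma FQCF_cl: assumes "0 < K" "K < N - 1" "-N+1 \<le> j" "j \<le> -K"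
  shows "FQCF N K r j = eta_hat (r j) - eta_hat (r (j-1))"
  using assms unfolding FQCF_def eta_hat_def by auto

lemma FQCF_l: assumes "0 < N" shows "FQCF N K r (-N) = eta_hat (r (-N))"
  using assms unfolding FQCF_def eta_hat_def by auto

lemma FQCF_r: assumes "0 < N" shows "FQCF N K r (N+1) = - eta_hat (r N)"
  using assms unfolding FQCF_def eta_hat_def by auto

lemma Phi_step: fixes f :: "int \<Rightarrow> real" assumes "-N < j" shows "Phi N f (j-1) = Phi N f j + f j"
proof -
  have "{-N..j} = insert j {-N..j-1}" using assms by auto
  then have "(\<Sum>i = -N..j. f i) = f j + (\<Sum>i = -N..j-1. f i)" by simp
  then show ?thesis unfolding Phi_def by simp
qed

lemma antisym_sum: fixes f :: "int \<Rightarrow> real" assumes antisym: "\<forall>j. 0 \<le> j \<and> j \<le> N \<longrightarrow> f (j + 1) = - f (-j)"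
  shows "int m \<le> N \<Longrightarrow> (\<Sum>i = - int m .. int m + 1. f i) = 0"
proof (induction m)
  case 0
  have "{0::int..1} = {0,1}" by auto
  moreover have "f (0+1) = - f (-0)" using antisym 0 by (metis order_refl of_nat_0_le_iff of_nat_0)
  ultimately show ?case by simp
next
  case (Suc m)
  have e: "{- int (Suc m) .. int (Suc m) + 1} = insert (- int (Suc m)) (insert (int (Suc m) + 1) {- int m .. int m + 1})"
    by auto
  have "f (int (Suc m) + 1) = - f (- int (Suc m))" using antisym Suc.prems
    by (metis of_nat_0_le_iff)
  then show ?case using Suc unfolding e by simp
qed

lemma Phi_N: fixes f :: "int \<Rightarrow> real" assumes "0 < N" and antisym: "\<forall>j. 0 \<le> j \<and> j \<le> N \<longrightarrow> f (j + 1) = - f (-j)"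
  shows "Phi N f N = f (N+1)"
proof -
  have "(\<Sum>i = - N .. N + 1. f i) = 0" using antisym_sum[OF antisym, of "nat N"] assms by simp
  moreover have "Phi N f (N+1-1) = Phi N f (N+1) + f (N+1)" using assms by (intro Phi_step) auto
  ultimately show ?thesis unfolding Phi_def by simp
qed


locale mainloc =
  fixes N K :: int and f :: "int \<Rightarrow> real" and rL rU M :: real
  assumes N0: "0 < N" and K0: "0 < K" and KN: "K < N - 1"
    and antisym: "\<forall>j. 0 \<le> j \<and> j \<le> N \<longrightarrow> f (j + 1) = - f (-j)"
    and rL0: "0 < rL" and rLU: "rL < rU" and r2: "r2t \<le> 2 * rL" and u6: "rU^6 < 13/7"
    and e1U: "e1 rU \<ge> 12 * M" and Mdef: "M = 21 / (64 * rL^8)"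
    and Phb: "\<forall>j. -N \<le> j \<and> j \<le> N \<longrightarrow>
           eta rL + 4 * eta (2 * rL) - 2 * eta (2 * rU) < Phi N f j \<and>
           Phi N f j < eta rU + 4 * eta (2 * rU) - 2 * eta (2 * rL)"
begin

lemmas L = rL0 rLU r2 u6 e1U Mdef

lemma Mpos: "M > 0" using M_pos[OF L] .

lemma eta_gap: assumes "rL \<le> x" "x \<le> rU" "rL \<le> y" "y \<le> rU"
  shows "\<bar>eta x - eta y\<bar> \<ge> 12 * M * \<bar>x - y\<bar>"
proof (cases "x \<le> y")
  case True
  then show ?thesis using eta_low_lip[OF L, of x y] assms by simp
next
  case False
  then show ?thesis using eta_low_lip[OF L, of y x] assms by simp
qed

lemma eta_inj: assumes "rL \<le> x" "x \<le> rU" "rL \<le> y" "y \<le> rU" "eta x = eta y" shows "x = y"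
proof -
  have "M * \<bar>x - y\<bar> \<le> 0" using eta_gap[OF assms(1-4)] assms(5) by simp
  then have "\<bar>x - y\<bar> \<le> 0" using Mpos by (simp add: mult_le_0_iff)
  then show ?thesis by simp
qed

lemma eta_hat_inj: assumes "rL \<le> x" "x \<le> rU" "rL \<le> y" "y \<le> rU" "eta_hat x = eta_hat y" shows "x = y"
  using eta_hat_strict[OF L, of x y] eta_hat_strict[OF L, of y x] assms by (cases x y rule: linorder_cases) auto

definition solve :: "real \<Rightarrow> real" where
  "solve u = (THE x. rL \<le> x \<and> x \<le> rU \<and> eta x = u)"

definition solveh :: "real \<Rightarrow> real" where
  "solveh u = (THE x. rL \<le> x \<and> x \<le> rU \<and> eta_hat x = u)"

lemma solve_eta: assumes "rL \<le> x" "x \<le> rU" shows "solve (eta x) = x"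
  unfolding solve_def using assms eta_inj by (intro the_equality) auto

lemma solveh_eta: assumes "rL \<le> x" "x \<le> rU" shows "solveh (eta_hat x) = x"
  unfolding solveh_def using assms eta_hat_inj by (intro the_equality) auto

lemma solve_prop: assumes "eta rL < u" "u < eta rU"
  shows "rL < solve u" "solve u < rU" "eta (solve u) = u"
proof -
  obtain x where x: "rL \<le> x" "x \<le> rU" "eta x = u"
    using IVT'[of eta rL u rU] assms rLU eta_cont[OF L] by auto
  have s: "solve u = x" using solve_eta[OF x(1,2)] x(3) by simp
  show "eta (solve u) = u" using s x by simp
  show "rL < solve u" using s x assms by (cases "x = rL") auto
  show "solve u < rU" using s x assms by (cases "x = rU") auto
qed

lemma solveh_prop: assumes "eta_hat rL < u" "u < eta_hat rU"
  shows "rL < solveh u" "solveh u < rU" "eta_hat (solveh u) = u"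
proof -
  obtain x where x: "rL \<le> x" "x \<le> rU" "eta_hat x = u"
    using IVT'[of eta_hat rL u rU] assms rLU eta_hat_cont[OF L] by auto
  have s: "solveh u = x" using solveh_eta[OF x(1,2)] x(3) by simp
  show "eta_hat (solveh u) = u" using s x by simp
  show "rL < solveh u" using s x assms by (cases "x = rL") auto
  show "solveh u < rU" using s x assms by (cases "x = rU") auto
qed

lemma solve_lip: assumes "eta rL < u" "u < eta rU" "eta rL < v" "v < eta rU"
  shows "\<bar>solve u - solve v\<bar> \<le> \<bar>u - v\<bar> / (12 * M)"
proof -
  have "12 * M * \<bar>solve u - solve v\<bar> \<le> \<bar>u - v\<bar>"
    using eta_gap[of "solve u" "solve v"] solve_prop[OF assms(1,2)] solve_prop[OF assms(3,4)] by simp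
  then show ?thesis using Mpos by (simp add: field_simps)
qed

lemma eta2: "eta (2 * rU) \<le> eta (2 * rL)"
  using eta_high_lip(1)[OF L, of "2*rL" "2*rU"] rLU by simp

lemma eta_sum_bounds: assumes "rL \<le> a" "a \<le> rU" "rL \<le> b" "b \<le> rU"
  shows "eta (2 * rU) \<le> eta (a + b)" "eta (a + b) \<le> eta (2 * rL)"
  using eta_high_lip(1)[OF L, of "a+b" "2*rU"] eta_high_lip(1)[OF L, of "2*rL" "a+b"] assms by auto

lemma eta_lipH: assumes "2 * rL \<le> s" "2 * rL \<le> t" shows "\<bar>eta s - eta t\<bar> \<le> M * \<bar>s - t\<bar>"
proof (cases "s \<le> t")
  case True
  then show ?thesis using eta_high_lip[OF L, of s t] assms by simp
next
  case False
  then show ?thesis using eta_high_lip[OF L, of t s] assms by simp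
qed

lemma Phi_hat: assumes "-N \<le> j" "j \<le> N" shows "eta_hat rL < Phi N f j" "Phi N f j < eta_hat rU"
  using Phb assms eta2 unfolding eta_hat_def by fastforce+

definition cc :: "int \<Rightarrow> real" where "cc j = solveh (Phi N f j)"

lemma cc_prop: assumes "-N \<le> j" "j \<le> N" shows "rL < cc j" "cc j < rU" "eta_hat (cc j) = Phi N f j"
  unfolding cc_def using solveh_prop[OF Phi_hat[OF assms]] by auto

definition gg :: "(int \<Rightarrow> real) \<Rightarrow> real" where
  "gg x = eta (x (K-1) + x K) + eta (x K + x (K+1)) - 2 * eta (2 * x K)"

definition AA :: "(int \<Rightarrow> real) \<Rightarrow> int \<Rightarrow> real" where
  "AA x j = Phi N f j + gg x - eta (x \<bar>j-1\<bar> + x j) - eta (x j + x (j+1))"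

definition TT :: "(int \<Rightarrow> real) \<Rightarrow> (int \<Rightarrow> real)" where
  "TT x = (\<lambda>j. if j \<in> {0..<K} then solve (AA x j) else cc j)"

definition SS :: "(int \<Rightarrow> real) set" where
  "SS = {x. (\<forall>i\<in>{0..<K}. rL \<le> x i \<and> x i \<le> rU) \<and> (\<forall>i. i \<notin> {0..<K} \<longrightarrow> x i = cc i)}"

lemma SS_bounds: assumes "x \<in> SS" "0 \<le> i" "i \<le> N" shows "rL \<le> x i" "x i \<le> rU"
  using assms cc_prop[of i] unfolding SS_def by (cases "i < K"; force)+

lemma SS_cc: assumes "x \<in> SS" "K \<le> i" shows "x i = cc i"
  using assms unfolding SS_def by auto

lemma AA_range: assumes x: "x \<in> SS" and j: "0 \<le> j" "j < K"
  shows "eta rL < AA x j" "AA x j < eta rU"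
proof -
  have b: "rL \<le> x i \<and> x i \<le> rU" if "0 \<le> i" "i \<le> K + 1" for i
    using SS_bounds[OF x, of i] that KN by auto
  have s1: "eta (2 * rU) \<le> eta (x \<bar>j-1\<bar> + x j) \<and> eta (x \<bar>j-1\<bar> + x j) \<le> eta (2 * rL)"
    using eta_sum_bounds[of "x \<bar>j-1\<bar>" "x j"] b[of "\<bar>j-1\<bar>"] b[of j] j by auto
  have s2: "eta (2 * rU) \<le> eta (x j + x (j+1)) \<and> eta (x j + x (j+1)) \<le> eta (2 * rL)"
    using eta_sum_bounds[of "x j" "x (j+1)"] b[of "j+1"] b[of j] j by auto
  have s3: "eta (2 * rU) \<le> eta (x (K-1) + x K) \<and> eta (x (K-1) + x K) \<le> eta (2 * rL)"
    using eta_sum_bounds[of "x (K-1)" "x K"] b[of "K-1"] b[of K] K0 by auto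
  have s4: "eta (2 * rU) \<le> eta (x K + x (K+1)) \<and> eta (x K + x (K+1)) \<le> eta (2 * rL)"
    using eta_sum_bounds[of "x K" "x (K+1)"] b[of "K+1"] b[of K] K0 by auto
  have xK: "rL < x K" "x K < rU" using SS_cc[OF x, of K] cc_prop[of K] K0 KN by auto
  have s5: "eta (2 * rU) < eta (2 * x K)" "eta (2 * x K) < eta (2 * rL)"
    using eta_high_strict[OF L, of "2 * x K" "2 * rU"] eta_high_strict[OF L, of "2 * rL" "2 * x K"] xK by auto
  have P: "eta rL + 4 * eta (2 * rL) - 2 * eta (2 * rU) < Phi N f j \<and>
           Phi N f j < eta rU + 4 * eta (2 * rU) - 2 * eta (2 * rL)" using Phb j KN by auto
  show "eta rL < AA x j" "AA x j < eta rU"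
    unfolding AA_def gg_def using s1 s2 s3 s4 s5 P by linarith+
qed

lemma TT_SS: assumes "x \<in> SS" shows "TT x \<in> SS"
  using solve_prop[OF AA_range[OF assms]] unfolding SS_def TT_def
  by (auto simp: less_imp_le)

lemma TT_contr: assumes x: "x \<in> SS" and y: "y \<in> SS" and i: "i \<in> {0..<K}"
  shows "\<bar>TT x i - TT y i\<bar> \<le> 5/12 * Max ((\<lambda>i. \<bar>x i - y i\<bar>) ` {0..<K})"
proof -
  define D where "D = Max ((\<lambda>i. \<bar>x i - y i\<bar>) ` {0..<K})"
  have D0: "0 \<le> D" unfolding D_def using K0 by (intro order.trans[OF _ Max_ge[of _ "\<bar>x 0 - y 0\<bar>"]]) auto
  have d: "\<bar>x k - y k\<bar> \<le> D" for k
  proof (cases "k \<in> {0..<K}")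
    case True then show ?thesis unfolding D_def by (intro Max_ge) auto
  next
    case False then show ?thesis using x y D0 unfolding SS_def by auto
  qed
  have bx: "rL \<le> x k \<and> x k \<le> rU" "rL \<le> y k \<and> y k \<le> rU" if "0 \<le> k" "k \<le> K + 1" for k
    using SS_bounds[OF x, of k] SS_bounds[OF y, of k] that KN by auto
  have lip2: "\<bar>eta (x a + x b) - eta (y a + y b)\<bar> \<le> M * (\<bar>x a - y a\<bar> + \<bar>x b - y b\<bar>)"
    if "0 \<le> a" "a \<le> K + 1" "0 \<le> b" "b \<le> K + 1" for a b
  proof -
    have "\<bar>eta (x a + x b) - eta (y a + y b)\<bar> \<le> M * \<bar>(x a + x b) - (y a + y b)\<bar>"
      using bx[OF that(1,2)] bx[OF that(3,4)] by (intro eta_lipH) auto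
    also have "\<dots> \<le> M * (\<bar>x a - y a\<bar> + \<bar>x b - y b\<bar>)" using Mpos by (intro mult_left_mono) auto
    finally show ?thesis .
  qed
  have j: "0 \<le> i" "i < K" using i by auto
  have xyK: "x K = y K" "x (K+1) = y (K+1)" using SS_cc[OF x] SS_cc[OF y] by auto
  have t1: "\<bar>eta (x (K-1) + x K) - eta (y (K-1) + y K)\<bar> \<le> M * (D + D)"
    using lip2[of "K-1" K] K0 d[of "K-1"] d[of K] Mpos
    by (smt (verit, best) mult_left_mono)
  have t2: "\<bar>eta (x \<bar>i-1\<bar> + x i) - eta (y \<bar>i-1\<bar> + y i)\<bar> \<le> M * (D + D)"
    using lip2[of "\<bar>i-1\<bar>" i] j d[of "\<bar>i-1\<bar>"] d[of i] Mpos
    by (smt (verit, best) mult_left_mono)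
  have t3: "\<bar>eta (x i + x (i+1)) - eta (y i + y (i+1))\<bar> \<le> M * (D + D)"
    using lip2[of i "i+1"] j d[of "i+1"] d[of i] Mpos
    by (smt (verit, best) mult_left_mono)
  have t1': "\<bar>eta (x (K-1) + x K) - eta (y (K-1) + y K)\<bar> \<le> M * D"
  proof -
    have "\<bar>eta (x (K-1) + x K) - eta (y (K-1) + y K)\<bar> \<le> M * (\<bar>x (K-1) - y (K-1)\<bar> + \<bar>x K - y K\<bar>)"
      using lip2[of "K-1" K] K0 by auto
    also have "\<dots> \<le> M * D" using xyK d[of "K-1"] Mpos by (intro mult_left_mono) auto
    finally show ?thesis .
  qed
  have "\<bar>AA x i - AA y i\<bar> \<le> 5 * M * D"
    unfolding AA_def gg_def using t1' t2 t3 xyK by (simp add: algebra_simps)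
  then have "\<bar>solve (AA x i) - solve (AA y i)\<bar> \<le> 5 * M * D / (12 * M)"
    using solve_lip[OF AA_range[OF x j] AA_range[OF y j]] Mpos
    by (smt (verit, best) divide_right_mono)
  also have "\<dots> = 5/12 * D" using Mpos by (simp add: field_simps)
  finally show ?thesis using i unfolding TT_def D_def by simp
qed

end

context mainloc begin

definition Sg :: "(int \<Rightarrow> real) \<Rightarrow> int \<Rightarrow> real" where
  "Sg x j = eta (x j) + eta (x \<bar>j-1\<bar> + x j) + eta (x j + x (j+1))"

lemma fix_exists: "\<exists>x\<in>SS. TT x = x"
proof (rule contraction_fix[OF SS_def])
  show "finite {0..<K}" by simp
  show "{0..<K} \<noteq> {}" using K0 by simp
  show "rL \<le> rU" using rLU by simp
  show "\<And>x. x \<in> SS \<Longrightarrow> TT x \<in> SS" by (rule TT_SS)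
  show "\<And>x y i. x \<in> SS \<Longrightarrow> y \<in> SS \<Longrightarrow> i \<in> {0..<K} \<Longrightarrow> \<bar>TT x i - TT y i\<bar> \<le> 5/12 * Max ((\<lambda>i. \<bar>x i - y i\<bar>) ` {0..<K})"
    by (rule TT_contr)
qed auto

lemma fix_sigma: assumes x: "x \<in> SS" "TT x = x" and j: "0 \<le> j" "j \<le> K"
  shows "Sg x j = Phi N f j + gg x"
proof (cases "j = K")
  case True
  have "eta_hat (x K) = Phi N f K" using SS_cc[OF x(1), of K] cc_prop[of K] K0 KN by auto
  moreover have "\<bar>K - 1\<bar> = K - 1" using K0 by simp
  ultimately show ?thesis using True unfolding Sg_def gg_def eta_hat_def by simp
next
  case False
  then have jK: "j \<in> {0..<K}" using j by auto
  have "x j = TT x j" using x(2) by simp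
  also have "\<dots> = solve (AA x j)" using jK by (simp add: TT_def)
  finally have "x j = solve (AA x j)" .
  then have "eta (x j) = AA x j" using solve_prop(3)[OF AA_range[OF x(1)]] jK by auto
  then show ?thesis unfolding Sg_def AA_def by simp
qed

lemma fix_strict: assumes x: "x \<in> SS" "TT x = x" and i: "0 \<le> i" "i \<le> N"
  shows "rL < x i" "x i < rU"
proof -
  have "rL < x i \<and> x i < rU"
  proof (cases "i < K")
    case True
    have "x i = TT x i" using x(2) by simp
    also have "\<dots> = solve (AA x i)" using True i by (simp add: TT_def)
    finally have "x i = solve (AA x i)" .
    then show ?thesis using solve_prop[OF AA_range[OF x(1)]] i True by auto
  next
    case False
    then show ?thesis using SS_cc[OF x(1), of i] cc_prop[of i] i by auto
  qed
  then show "rL < x i" "x i < rU" by auto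
qed


lemma fix_eqs: assumes x: "x \<in> SS" "TT x = x" and j: "-N \<le> j" "j \<le> N + 1"
  shows "FQCF N K (\<lambda>j. x \<bar>j\<bar>) j + f j = 0"
proof -
  let ?r = "\<lambda>j. x \<bar>j\<bar>"
  have PN: "Phi N f N = f (N+1)" using Phi_N[OF N0 antisym] .
  have xN: "eta_hat (x N) = Phi N f N" using SS_cc[OF x(1), of N] cc_prop[of N] KN N0 by auto
  have af: "f (m + 1) = - f (- m)" if "0 \<le> m" "m \<le> N" for m using antisym that by blast
  consider "j = -N" | "j = N + 1" | "-N+1 \<le> j \<and> j \<le> -K" | "K+1 \<le> j \<and> j \<le> N"
    | "1 \<le> j \<and> j \<le> K" | "-K+1 \<le> j \<and> j \<le> 0"
    using j by linarith
  then show ?thesis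
  proof cases
    case 1
    then show ?thesis using FQCF_l[OF N0, of K ?r] xN PN af[of N] N0 abs_of_pos[OF N0] by simp
  next
    case 2
    then show ?thesis using FQCF_r[OF N0, of K ?r] xN PN abs_of_pos[OF N0] by simp
  next
    case 3
    define m where "m = -j"
    have m: "K \<le> m" "m \<le> N - 1" using 3 m_def by auto
    have e1: "\<bar>j\<bar> = m" "\<bar>j - 1\<bar> = m + 1" using m K0 m_def by auto
    have h1: "eta_hat (x m) = Phi N f m" using SS_cc[OF x(1), of m] cc_prop[of m] m K0 by auto
    have h2: "eta_hat (x (m+1)) = Phi N f (m+1)" using SS_cc[OF x(1), of "m+1"] cc_prop[of "m+1"] m K0 by auto
    have ps: "Phi N f m = Phi N f (m+1) + f (m+1)" using Phi_step[of N "m+1" f] m K0 by simp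
    have "FQCF N K ?r j = eta_hat (x m) - eta_hat (x (m+1))"
      using FQCF_cl[OF K0 KN, of j ?r] 3 e1 by simp
    then show ?thesis using h1 h2 ps af[of m] m K0 m_def by simp
  next
    case 4
    have e1: "\<bar>j\<bar> = j" "\<bar>j - 1\<bar> = j - 1" using 4 K0 by auto
    have h1: "eta_hat (x j) = Phi N f j" using SS_cc[OF x(1), of j] cc_prop[of j] 4 K0 by auto
    have h2: "eta_hat (x (j-1)) = Phi N f (j-1)" using SS_cc[OF x(1), of "j-1"] cc_prop[of "j-1"] 4 K0 by auto
    have ps: "Phi N f (j-1) = Phi N f j + f j" using Phi_step[of N j f] 4 K0 by simp
    have "FQCF N K ?r j = eta_hat (x j) - eta_hat (x (j-1))"
      using FQCF_cr[OF K0 KN, of j ?r] 4 e1 by simp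
    then show ?thesis using h1 h2 ps by simp
  next
    case 5
    have e1: "\<bar>j\<bar> = j" "\<bar>j - 1\<bar> = j - 1" "\<bar>j + 1\<bar> = j + 1" "\<bar>j - 1 - 1\<bar> = \<bar>j - 2\<bar>" using 5 by auto
    have s1: "Sg x j = Phi N f j + gg x" using fix_sigma[OF x, of j] 5 by auto
    have s2: "Sg x (j-1) = Phi N f (j-1) + gg x" using fix_sigma[OF x, of "j-1"] 5 by auto
    have ps: "Phi N f (j-1) = Phi N f j + f j" using Phi_step[of N j f] 5 K0 KN by simp
    have "FQCF N K ?r j = (eta (x j) + eta (x j + x (j+1))) - (eta (x (j-1)) + eta (x (j-1) + x \<bar>j-2\<bar>))"
      using FQCF_at[OF K0 KN, of j ?r] 5 e1 by simp
    then show ?thesis using s1 s2 ps e1 unfolding Sg_def by (simp add: add.commute)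
  next
    case 6
    define m where "m = 1 - j"
    have m: "1 \<le> m" "m \<le> K" using 6 m_def by auto
    have e1: "\<bar>j\<bar> = m - 1" "\<bar>j - 1\<bar> = m" "\<bar>j + 1\<bar> = \<bar>m - 2\<bar>" "\<bar>j - 2\<bar> = m + 1"
      "\<bar>m - 1 - 1\<bar> = \<bar>m - 2\<bar>" "\<bar>m - 1\<bar> = m - 1" "m - 1 + 1 = m"
      using m m_def by auto
    have s1: "Sg x m = Phi N f m + gg x" using fix_sigma[OF x, of m] m by auto
    have s2: "Sg x (m-1) = Phi N f (m-1) + gg x" using fix_sigma[OF x, of "m-1"] m by auto
    have ps: "Phi N f (m-1) = Phi N f m + f m" using Phi_step[of N m f] m K0 KN by simp
    have fj: "f j = - f m" using af[of "m-1"] m KN m_def by simp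
    have "FQCF N K ?r j = (eta (x (m-1)) + eta (x (m-1) + x \<bar>m-2\<bar>)) - (eta (x m) + eta (x m + x (m+1)))"
      using FQCF_at[OF K0 KN, of j ?r] 6 e1 by simp
    then show ?thesis using s1 s2 ps fj e1 unfolding Sg_def by (simp add: add.commute)
  qed
qed


lemma uniq_cont: assumes bnd: "\<forall>j. -N \<le> j \<and> j \<le> N \<longrightarrow> rL < r' j \<and> r' j < rU"
    and eq: "\<forall>j. -N \<le> j \<and> j \<le> N + 1 \<longrightarrow> FQCF N K r' j + f j = 0"
    and j: "K \<le> j" "j \<le> N"
  shows "r' j = cc j"
proof -
  have H: "K \<le> N - int n \<longrightarrow> eta_hat (r' (N - int n)) = Phi N f (N - int n)" for n :: nat
  proof (induction n)
    case 0
    have "FQCF N K r' (N+1) + f (N+1) = 0" using eq N0 by auto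
    then show ?case using FQCF_r[OF N0, of K r'] Phi_N[OF N0 antisym] by simp
  next
    case (Suc n)
    show ?case
    proof
      assume a: "K \<le> N - int (Suc n)"
      define i where "i = N - int n"
      have i: "K + 1 \<le> i" "i \<le> N" using a i_def by auto
      have ih: "eta_hat (r' i) = Phi N f i" using Suc.IH i i_def by auto
      have "FQCF N K r' i + f i = 0" using eq i K0 by auto
      then have "eta_hat (r' i) - eta_hat (r' (i-1)) + f i = 0" using FQCF_cr[OF K0 KN i] by simp
      moreover have "Phi N f (i-1) = Phi N f i + f i" using Phi_step[of N i f] i K0 by simp
      moreover have k: "N - int (Suc n) = i - 1" using i_def by simp
      ultimately show "eta_hat (r' (N - int (Suc n))) = Phi N f (N - int (Suc n))" unfolding k using ih by simp
    qed
  qed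
  have "eta_hat (r' j) = Phi N f j" using H[of "nat (N - j)"] j by simp
  moreover have "rL \<le> r' j" "r' j \<le> rU" using bnd j K0 by (auto simp: less_imp_le)
  ultimately show ?thesis unfolding cc_def using solveh_eta by metis
qed

lemma uniq_sigma: assumes bnd: "\<forall>j. -N \<le> j \<and> j \<le> N \<longrightarrow> rL < r' j \<and> r' j < rU"
    and eq: "\<forall>j. -N \<le> j \<and> j \<le> N + 1 \<longrightarrow> FQCF N K r' j + f j = 0"
    and j: "0 \<le> j" "j \<le> K"
  shows "eta (r' j) + eta (r' (j-1) + r' j) + eta (r' j + r' (j+1)) = Phi N f j +
     (eta (r' (K-1) + r' K) + eta (r' K + r' (K+1)) - 2 * eta (2 * r' K))"
proof -
  let ?g = "eta (r' (K-1) + r' K) + eta (r' K + r' (K+1)) - 2 * eta (2 * r' K)"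
  have H: "int n \<le> K \<longrightarrow> eta (r' (K - int n)) + eta (r' (K - int n - 1) + r' (K - int n)) + eta (r' (K - int n) + r' (K - int n + 1)) = Phi N f (K - int n) + ?g" for n :: nat
  proof (induction n)
    case 0
    have "eta_hat (r' K) = Phi N f K" using uniq_cont[OF bnd eq, of K] cc_prop[of K] K0 KN by auto
    then show ?case unfolding eta_hat_def by simp
  next
    case (Suc n)
    show ?case
    proof
      assume a: "int (Suc n) \<le> K"
      define i where "i = K - int n"
      have i: "1 \<le> i" "i \<le> K" using a i_def by auto
      have ih: "eta (r' i) + eta (r' (i - 1) + r' i) + eta (r' i + r' (i + 1)) = Phi N f i + ?g"
        using Suc.IH i i_def by auto
      have "FQCF N K r' i + f i = 0" using eq i K0 KN by auto
      then have e: "(eta (r' i) + eta (r' i + r' (i+1))) - (eta (r' (i-1)) + eta (r' (i-1) + r' (i-2))) + f i = 0"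
        using FQCF_at[OF K0 KN, of i r'] i by simp
      have ps: "Phi N f (i-1) = Phi N f i + f i" using Phi_step[of N i f] i K0 KN by simp
      have k: "K - int (Suc n) = i - 1" "i - 1 - 1 = i - 2" "i - 1 + 1 = i" using i_def by auto
      show "eta (r' (K - int (Suc n))) + eta (r' (K - int (Suc n) - 1) + r' (K - int (Suc n))) + eta (r' (K - int (Suc n)) + r' (K - int (Suc n) + 1)) = Phi N f (K - int (Suc n)) + ?g"
        unfolding k using ih e ps by (simp add: add.commute)
    qed
  qed
  show ?thesis using H[of "nat (K - j)"] j by simp
qed

lemma main_result:
  "\<exists>r. symmetric_vec N r
             \<and> (\<forall>j. -N \<le> j \<and> j \<le> N \<longrightarrow> rL < r j \<and> r j < rU)
             \<and> (\<forall>j. -N \<le> j \<and> j \<le> N + 1 \<longrightarrow> FQCF N K r j + f j = 0)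
             \<and> (\<forall>r'. symmetric_vec N r'
                     \<and> (\<forall>j. -N \<le> j \<and> j \<le> N \<longrightarrow> rL < r' j \<and> r' j < rU)
                     \<and> (\<forall>j. -N \<le> j \<and> j \<le> N + 1 \<longrightarrow> FQCF N K r' j + f j = 0)
                     \<longrightarrow> (\<forall>j. -N \<le> j \<and> j \<le> N \<longrightarrow> r' j = r j))"
proof -
  obtain x where x: "x \<in> SS" "TT x = x" using fix_exists by blast
  let ?r = "\<lambda>j. x \<bar>j\<bar>"
  have sym: "symmetric_vec N ?r" unfolding symmetric_vec_def by simp
  have bnd: "\<forall>j. -N \<le> j \<and> j \<le> N \<longrightarrow> rL < ?r j \<and> ?r j < rU"
    using fix_strict[OF x] by auto
  have eqs: "\<forall>j. -N \<le> j \<and> j \<le> N + 1 \<longrightarrow> FQCF N K ?r j + f j = 0"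
    using fix_eqs[OF x] by auto
  have uni: "\<forall>j. -N \<le> j \<and> j \<le> N \<longrightarrow> r' j = ?r j"
    if sym': "symmetric_vec N r'" and bnd': "\<forall>j. -N \<le> j \<and> j \<le> N \<longrightarrow> rL < r' j \<and> r' j < rU"
      and eq': "\<forall>j. -N \<le> j \<and> j \<le> N + 1 \<longrightarrow> FQCF N K r' j + f j = 0" for r'
  proof -
    define y where "y = (\<lambda>i. if i \<in> {0..<K} then r' i else cc i)"
    have agree: "y i = r' i" if "0 \<le> i" "i \<le> N" for i
      using uniq_cont[OF bnd' eq', of i] that unfolding y_def by auto
    have yS: "y \<in> SS" unfolding SS_def y_def using bnd' KN by (auto simp: less_imp_le)
    have yfix: "TT y = y"
    proof
      fix i
      show "TT y i = y i"
      proof (cases "i \<in> {0..<K}")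
        case False
        then show ?thesis unfolding TT_def y_def by (simp only: if_False)
      next
        case True
        have i: "0 \<le> i" "i < K" using True by auto
        have a1: "y \<bar>i-1\<bar> = r' (i - 1)"
        proof (cases "i = 0")
          case True
          then have "y \<bar>i-1\<bar> = r' 1" using agree[of 1] KN K0 by simp
          also have "\<dots> = r' (-1)"
          proof -
            have n1: "1 \<le> N" using KN K0 by simp
            have "\<forall>j. 1 \<le> j \<and> j \<le> N \<longrightarrow> r' (-j) = r' j" using sym' unfolding symmetric_vec_def .
            then have "r' (-1) = r' 1" using n1 by simp
            then show ?thesis by simp
          qed
          finally show ?thesis using True by simp
        next
          case False
          then show ?thesis using agree[of "i-1"] i KN by simp
        qed
        have a2: "y i = r' i" "y (i+1) = r' (i+1)" "y (K-1) = r' (K-1)" "y K = r' K" "y (K+1) = r' (K+1)"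
          using agree i KN K0 by auto
        have "AA y i = eta (r' i)"
          using uniq_sigma[OF bnd' eq', of i] i unfolding AA_def gg_def a1 a2 by simp
        then have "TT y i = solve (eta (r' i))" using True unfolding TT_def by simp
        also have "\<dots> = r' i" using bnd' i KN by (intro solve_eta) (auto simp: less_imp_le)
        finally show ?thesis using a2 by simp
      qed
    qed
    have "y = x"
      by (rule contraction_uniq[OF SS_def _ _ TT_contr _ _ yS x(1) yfix x(2)]) (use K0 in auto)
    show ?thesis
    proof (intro allI impI)
      fix j assume j: "-N \<le> j \<and> j \<le> N"
      show "r' j = ?r j"
      proof (cases "0 \<le> j")
        case True
        then show ?thesis using agree[of j] j \<open>y = x\<close> by simp
      next
        case False
        then have "r' j = r' (-j)" using sym' j unfolding symmetric_vec_def
          by (metis minus_minus neg_0_less_iff_less not_le zle_add1_eq_le add.left_neutral neg_le_iff_le)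
        then show ?thesis using agree[of "-j"] j False \<open>y = x\<close> by simp
      qed
    qed
  qed
  show ?thesis using sym bnd eqs uni by blast
qed

end

theorem corollary4p7:
  fixes N K :: int and f :: "int \<Rightarrow> real" and rU :: real
  assumes "0 < N" and "0 < K" and "K < N - 1"
    and antisym: "\<forall>j. 0 \<le> j \<and> j \<le> N \<longrightarrow> f (j + 1) = - f (-j)"
    and "r2t / 2 < rU" and "rU < a1"
    and "r_lower rU < rU"
    and "\<forall>j. -N \<le> j \<and> j \<le> N \<longrightarrow>
           eta (r_lower rU) + 4 * eta (2 * r_lower rU) - 2 * eta (2 * rU) < Phi N f j \<and>
           Phi N f j < eta rU + 4 * eta (2 * rU) - 2 * eta (2 * r_lower rU)"
  shows "\<exists>r. symmetric_vec N r
             \<and> (\<forall>j. -N \<le> j \<and> j \<le> N \<longrightarrow> r_lower rU < r j \<and> r j < rU)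
             \<and> (\<forall>j. -N \<le> j \<and> j \<le> N + 1 \<longrightarrow> FQCF N K r j + f j = 0)
             \<and> (\<forall>r'. symmetric_vec N r'
                     \<and> (\<forall>j. -N \<le> j \<and> j \<le> N \<longrightarrow> r_lower rU < r' j \<and> r' j < rU)
                     \<and> (\<forall>j. -N \<le> j \<and> j \<le> N + 1 \<longrightarrow> FQCF N K r' j + f j = 0)
                     \<longrightarrow> (\<forall>j. -N \<le> j \<and> j \<le> N \<longrightarrow> r' j = r j))"
proof -
  note sf = setup_facts[OF assms(5,6,7)]
  interpret mainloc N K f "r_lower rU" rU "21 / (64 * (r_lower rU)^8)"
    using assms sf by unfold_locales auto
  show ?thesis using main_result .
qed

end
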